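(* For $n\ge 2$ let $G_n$ be the intersection graph of the $\binom{n}{2}$ closed intervals $[i,j]$, $1\le i<j\le n$ (two intervals adjacent iff they intersect). If $G_n$ is the union of $t$ comparability subgraphs $H_1,\dots,H_t$ (i.e. $E(G_n)=\bigcup_{i=1}^t E(H_i)$), then $t\ge \frac12\log\log n$, where logarithms are base $2$.
   Context: A comparability graph is a graph admitting a transitive orientation (equivalently, the comparability graph of a partial order). *)

theory Defs
  imports Complex_Main
begin

text \<open>Vertices of G_n: the closed intervals [i,j] with 1 \<le> i < j \<le> n, encoded as pairs (i,j).\<close>
definition intervals :: "nat \<Rightarrow> (nat \<times> nat) set" where
  "intervals n = {(i,j). 1 \<le> i \<and> i < j \<and> j \<le> n}"

definition intervals_meet :: "nat \<times> nat \<Rightarrow> nat \<times> nat \<Rightarrow> bool" where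
  "intervals_meet I J \<longleftrightarrow> max (fst I) (fst J) \<le> min (snd I) (snd J)"

definition Gn_edges :: "nat \<Rightarrow> ((nat \<times> nat) \<times> (nat \<times> nat)) set" where
  "Gn_edges n = {(I,J). I \<in> intervals n \<and> J \<in> intervals n \<and> I \<noteq> J \<and> intervals_meet I J}"

text \<open>A (simple) graph given by a symmetric irreflexive edge relation E is a comparability
  graph iff it admits a transitive orientation: a transitive relation O \<subseteq> E containing
  exactly one of (x,y),(y,x) for every edge.\<close>
definition transitive_orientation :: "('a \<times> 'a) set \<Rightarrow> ('a \<times> 'a) set \<Rightarrow> bool" where
  "transitive_orientation E R \<longleftrightarrow> R \<subseteq> E \<and> trans R \<and>
     (\<forall>x y. (x,y) \<in> E \<longrightarrow> ((x,y) \<in> R \<longleftrightarrow> (y,x) \<notin> R))"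

definition comparability_graph :: "('a \<times> 'a) set \<Rightarrow> bool" where
  "comparability_graph E \<longleftrightarrow> sym E \<and> irrefl E \<and> (\<exists>R. transitive_orientation E R)"

end

theory Submission
  imports Defs
begin

theorem theorem7:
  fixes n t :: nat and H :: "nat \<Rightarrow> ((nat \<times> nat) \<times> (nat \<times> nat)) set"
  assumes "n \<ge> 2"
    and "\<And>k. k < t \<Longrightarrow> comparability_graph (H k) \<and> H k \<subseteq> Gn_edges n"
    and "(\<Union>k<t. H k) = Gn_edges n"
  shows "real t \<ge> 1/2 * log 2 (log 2 (real n))"
proof -
  define R where "R m = (SOME R. transitive_orientation (H m) R)" for m
  have R: "R m \<subseteq> H m \<and> trans (R m) \<and> (\<forall>x y. (x,y) \<in> H m \<longrightarrow> ((x,y) \<in> R m \<longleftrightarrow> (y,x) \<notin> R m))"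
    if "m < t" for m
  proof -
    from assms(2)[OF that] obtain Q where "transitive_orientation (H m) Q"
      unfolding comparability_graph_def by blast
    hence "transitive_orientation (H m) (R m)" unfolding R_def by (rule someI)
    thus ?thesis unfolding transitive_orientation_def by blast
  qed
  define P where "P i j k m d = (if d then ((i,j),(j,k)) \<in> R m else ((j,k),(i,j)) \<in> R m)"
    for i j k :: nat and m :: nat and d :: bool
  define S where "S i j = {(m,d). m < t \<and> (\<exists>k. j < k \<and> k \<le> n \<and> P i j k m d)}" for i j
  have Sne: "S i j \<noteq> S j k" if "1 \<le> i" "i < j" "j < k" "k \<le> n" for i j k
  proof -
    have "((i,j),(j,k)) \<in> Gn_edges n" using that
      unfolding Gn_edges_def intervals_def intervals_meet_def by auto
    with assms(3) obtain m where m: "m < t" "((i,j),(j,k)) \<in> H m" by blast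
    from R[OF m(1)] m(2) obtain d where d: "P i j k m d"
      unfolding P_def by (metis (full_types))
    have a: "(m,d) \<in> S i j" unfolding S_def using m d that by auto
    have "(m,d) \<notin> S j k"
    proof
      assume "(m,d) \<in> S j k"
      then obtain l where l: "k < l" "l \<le> n" "P j k l m d" unfolding S_def by auto
      have tr: "trans (R m)" and sub: "R m \<subseteq> Gn_edges n" using R[OF m(1)] assms(2)[OF m(1)] by auto
      have "((i,j),(k,l)) \<in> R m \<or> ((k,l),(i,j)) \<in> R m"
        using d l(3) tr unfolding P_def by (cases d) (auto dest: transD)
      hence "((i,j),(k,l)) \<in> Gn_edges n \<or> ((k,l),(i,j)) \<in> Gn_edges n" using sub by auto
      thus False using that l unfolding Gn_edges_def intervals_meet_def by auto
    qed
    with a show ?thesis by blast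
  qed
  define T where "T i = {S i j | j. i < j \<and> j \<le> n}" for i
  have inj: "inj_on T {1..n}"
  proof (rule inj_onI)
    fix i j assume ij: "i \<in> {1..n}" "j \<in> {1..n}" "T i = T j"
    show "i = j"
    proof (rule ccontr)
      assume "i \<noteq> j"
      then consider "i < j" | "j < i" by linarith
      thus False
      proof cases
        case 1
        have "S i j \<in> T j" using ij 1 unfolding T_def by auto
        then obtain k where "j < k" "k \<le> n" "S i j = S j k" unfolding T_def by auto
        thus False using Sne[of i j k] ij 1 by auto
      next
        case 2
        have "S j i \<in> T i" using ij 2 unfolding T_def by auto
        then obtain k where "i < k" "k \<le> n" "S j i = S i k" unfolding T_def by auto
        thus False using Sne[of j i k] ij 2 by auto
      qed
    qed
  qed
  have img: "T ` {1..n} \<subseteq> Pow (Pow ({..<t} \<times> (UNIV :: bool set)))"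
    unfolding T_def S_def by auto
  have "n = card {1..n}" by simp
  also have "\<dots> = card (T ` {1..n})" using card_image[OF inj] by simp
  also have "\<dots> \<le> card (Pow (Pow ({..<t} \<times> (UNIV :: bool set))))"
    by (rule card_mono[OF _ img]) simp
  also have "\<dots> = 2 ^ 2 ^ (2 * t)"
    by (simp add: card_Pow card_cartesian_product mult.commute)
  finally have nle: "n \<le> 2 ^ 2 ^ (2 * t)" .
  have rn: "real n \<le> 2 ^ 2 ^ (2 * t)"
    using nle by (metis of_nat_le_iff of_nat_numeral of_nat_power)
  have n1: "real n \<ge> 2" using assms(1) by simp
  have l1: "log 2 (real n) \<le> 2 ^ (2 * t)"
  proof -
    have "log 2 (real n) \<le> log 2 (2 ^ 2 ^ (2 * t))" using rn n1 by (subst log_le_cancel_iff) auto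
    thus ?thesis by (simp add: log_nat_power)
  qed
  have l0: "log 2 (real n) \<ge> 1" using n1 by simp
  have "log 2 (log 2 (real n)) \<le> log 2 (2 ^ (2 * t))" using l1 l0 by (subst log_le_cancel_iff) auto
  also have "\<dots> = real (2 * t)" by (simp add: log_nat_power)
  finally show ?thesis by simp
qed

end
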